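(* Let $g$ be a non-constant entire function of finite order $\rho\ge0$ whose Taylor coefficients are all non-negative. Then $f=e^g$ is Gaussian.
   Context: Such $f=\sum_n a_nz^n$ is entire, with $a_n\ge0$ and $a_0>0$. For $t>0$, $X_t$ is the random variable with $\mathbf{P}(X_t=n)=a_nt^n/f(t)$, $n\ge0$. With $m_f(t)=\mathbf{E}(X_t)$, $\sigma_f^2(t)=\mathbf{V}(X_t)>0$ and $\breve{X}_t=(X_t-m_f(t))/\sigma_f(t)$, $f$ is called Gaussian if $\breve{X}_t$ converges in distribution to a standard normal random variable as $t\to+\infty$. The order of an entire function $g$ is $\limsup_{r\to\infty}\frac{\ln\ln\max_{|z|=r}|g(z)|}{\ln r}$. *)

theory Defs
  imports "HOL-Complex_Analysis.Complex_Analysis" "HOL-Probability.Probability"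
begin

definition taylor_coeff :: "(complex \<Rightarrow> complex) \<Rightarrow> nat \<Rightarrow> complex" where
  "taylor_coeff h n = (deriv ^^ n) h 0 / of_nat (fact n)"

definition max_modulus :: "(complex \<Rightarrow> complex) \<Rightarrow> real \<Rightarrow> real" where
  "max_modulus h r = (SUP z\<in>{z. norm z = r}. norm (h z))"

definition entire_order :: "(complex \<Rightarrow> complex) \<Rightarrow> ereal" where
  "entire_order h = Limsup at_top (\<lambda>r. ereal (ln (ln (max_modulus h r)) / ln r))"

text \<open>For a power series with coefficients a (a n \<ge> 0, a 0 > 0) and t > 0, X_t is the
  random variable on the naturals with P(X_t = n) = a n t^n / f t.\<close>
definition ps_val :: "(nat \<Rightarrow> real) \<Rightarrow> real \<Rightarrow> real" where
  "ps_val a t = (\<Sum>n. a n * t ^ n)"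

definition ps_mean :: "(nat \<Rightarrow> real) \<Rightarrow> real \<Rightarrow> real" where
  "ps_mean a t = (\<Sum>n. real n * a n * t ^ n) / ps_val a t"

definition ps_sigma :: "(nat \<Rightarrow> real) \<Rightarrow> real \<Rightarrow> real" where
  "ps_sigma a t = sqrt ((\<Sum>n. (real n - ps_mean a t)\<^sup>2 * a n * t ^ n) / ps_val a t)"

definition ps_normalized_cdf :: "(nat \<Rightarrow> real) \<Rightarrow> real \<Rightarrow> real \<Rightarrow> real" where
  "ps_normalized_cdf a t x =
     (\<Sum>n. if (real n - ps_mean a t) / ps_sigma a t \<le> x then a n * t ^ n else 0) / ps_val a t"

definition std_normal_cdf :: "real \<Rightarrow> real" where
  "std_normal_cdf x = measure (density lborel std_normal_density) {..x}"

text \<open>Gaussian: the normalised variable converges in distribution to N(0,1) as t \<rightarrow> \<infinity>;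
  since the limit CDF is continuous, this is pointwise convergence of the CDFs.\<close>
definition gaussian :: "(nat \<Rightarrow> real) \<Rightarrow> bool" where
  "gaussian a \<longleftrightarrow> (\<forall>x. ((\<lambda>t. ps_normalized_cdf a t x) \<longlongrightarrow> std_normal_cdf x) at_top)"

end

theory Submission
  imports Defs "HOL-Real_Asymp.Real_Asymp"
begin



lemma wdist:
  fixes w :: "nat \<Rightarrow> real" and \<phi> :: "nat \<Rightarrow> real"
  assumes w0: "\<And>n. w n \<ge> 0" and ws: "w sums 1"
  defines "N \<equiv> density (count_space UNIV) (\<lambda>n. ennreal (w n))"
  shows "real_distribution (distr N borel \<phi>)"
    and "\<And>x. cdf (distr N borel \<phi>) x = (\<Sum>n. if \<phi> n \<le> x then w n else 0)"
    and "\<And>\<theta>. char (distr N borel \<phi>) \<theta> = (\<Sum>n. of_real (w n) * iexp (\<theta> * \<phi> n))"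
proof -
  have sw: "summable w" using ws by (simp add: sums_iff)
  have spN: "space N = UNIV" by (simp add: N_def)
  have emN: "emeasure N UNIV = 1"
    unfolding N_def using ws w0
    by (simp add: emeasure_density nn_integral_count_space_nat suminf_ennreal2 sw sums_unique[symmetric])
  interpret N: prob_space N
    by (rule prob_spaceI) (simp add: N_def emN[unfolded N_def])
  show "real_distribution (distr N borel \<phi>)"
  proof -
    have "prob_space (distr N borel \<phi>)" by (rule N.prob_space_distr) (simp add: N_def)
    then show ?thesis unfolding real_distribution_def real_distribution_axioms_def by simp
  qed
  have intN: "integral\<^sup>L N h = (\<Sum>n. of_real (w n) * h n)" if hb: "\<And>n. norm (h n) \<le> 1"
    for h :: "nat \<Rightarrow> complex"
  proof -
    have "integral\<^sup>L N h = integral\<^sup>L (count_space UNIV) (\<lambda>n. w n *\<^sub>R h n)"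
      unfolding N_def by (subst integral_density) (auto simp: w0)
    also have "\<dots> = (\<Sum>n. w n *\<^sub>R h n)"
    proof (rule integral_count_space_nat)
      show "integrable (count_space UNIV) (\<lambda>n. w n *\<^sub>R h n)"
        unfolding integrable_count_space_nat_iff
      proof (rule summable_comparison_test[OF _ sw])
        show "\<exists>N. \<forall>n\<ge>N. norm (norm (w n *\<^sub>R h n)) \<le> w n"
          using hb w0 by (auto intro!: mult_left_le simp: abs_of_nonneg)
      qed
    qed
    finally show ?thesis by (simp add: scaleR_conv_of_real)
  qed
  show "char (distr N borel \<phi>) \<theta> = (\<Sum>n. of_real (w n) * iexp (\<theta> * \<phi> n))" for \<theta>
    unfolding char_def
    by (subst integral_distr) (auto simp: N_def intro!: intN[unfolded N_def] simp: norm_exp_i_times)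
  show "cdf (distr N borel \<phi>) x = (\<Sum>n. if \<phi> n \<le> x then w n else 0)" for x
  proof -
    have "cdf (distr N borel \<phi>) x = measure N (\<phi> -` {..x})"
      proof -
      have m: "\<phi> \<in> measurable N borel" by (simp add: N_def)
      show ?thesis unfolding cdf_def using measure_distr[OF m, of "{..x}"] spN by simp
    qed
    also have "\<dots> = Re (integral\<^sup>L N (\<lambda>n. of_real (indicator (\<phi> -` {..x}) n)))"
      by (simp add: spN)
    also have "\<dots> = Re (\<Sum>n. of_real (w n) * of_real (indicator (\<phi> -` {..x}) n))"
      by (subst intN) (auto simp: indicator_def)
    also have "\<dots> = (\<Sum>n. if \<phi> n \<le> x then w n else 0)"
    proof -
      have "summable (\<lambda>n. if \<phi> n \<le> x then w n else 0)"
        by (rule summable_comparison_test[OF _ sw]) (auto simp: w0)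
      then have "(\<lambda>n. of_real (if \<phi> n \<le> x then w n else 0) :: complex) sums of_real (\<Sum>n. if \<phi> n \<le> x then w n else 0)"
        by (intro sums_of_real) (simp add: summable_sums)
      moreover have "(\<lambda>n. of_real (if \<phi> n \<le> x then w n else 0) :: complex) = (\<lambda>n. of_real (w n) * of_real (indicator (\<phi> -` {..x}) n))"
        by (auto simp: indicator_def)
      ultimately show ?thesis by (simp add: sums_unique[symmetric])
    qed
    finally show ?thesis .
  qed
qed


lemma taylor_sums:
  assumes "h holomorphic_on UNIV"
  shows "(\<lambda>n. taylor_coeff h n * z ^ n) sums h z"
proof -
  have "(\<lambda>n. (deriv ^^ n) h 0 / fact n * (z - 0) ^ n) sums h z"
    by (rule holomorphic_power_series[where r = "norm z + 1"])
       (auto intro: holomorphic_on_subset[OF assms])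
  then show ?thesis by (simp add: taylor_coeff_def)
qed

lemma powser_nmul:
  fixes c :: "nat \<Rightarrow> complex"
  assumes "\<And>y. summable (\<lambda>n. c n * y ^ n)"
  shows "(\<lambda>n. of_nat n * c n * z ^ n) sums (z * (\<Sum>n. diffs c n * z ^ n))"
proof -
  have "(\<lambda>n. diffs c n * z ^ n) sums (\<Sum>n. diffs c n * z ^ n)"
    using termdiff_converges_all[OF assms] by (simp add: summable_sums)
  then have "(\<lambda>n. z * (diffs c n * z ^ n)) sums (z * (\<Sum>n. diffs c n * z ^ n))"
    by (rule sums_mult)
  then have "(\<lambda>n. of_nat (Suc n) * c (Suc n) * z ^ (Suc n)) sums (z * (\<Sum>n. diffs c n * z ^ n))"
    by (simp add: diffs_def algebra_simps)
  then show ?thesis by (subst (asm) sums_Suc_iff) simp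
qed

definition nnc :: "complex \<Rightarrow> bool" where "nnc c \<longleftrightarrow> Im c = 0 \<and> Re c \<ge> 0"

lemma nnc_mult: "nnc a \<Longrightarrow> nnc b \<Longrightarrow> nnc (a * b)"
  by (simp add: nnc_def)

lemma nnc_sum: "(\<And>i. i \<in> A \<Longrightarrow> nnc (f i)) \<Longrightarrow> nnc (sum f A)"
  by (simp add: nnc_def Im_sum Re_sum sum_nonneg)

lemma nnc_of_nat: "nnc (of_nat n)" by (simp add: nnc_def)

lemma nnc_fact: "nnc (fact n)" by (metis nnc_of_nat of_nat_fact)

lemma exp_coeff_nnc:
  assumes hol: "g holomorphic_on UNIV"
    and co: "\<And>n. nnc (taylor_coeff g n)"
  shows "nnc ((deriv ^^ n) (\<lambda>z. exp (g z)) 0)"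
proof (induction n rule: less_induct)
  case (less n)
  let ?E = "\<lambda>z. exp (g z)"
  have dg: "nnc ((deriv ^^ k) g 0)" for k
  proof -
    have "(deriv ^^ k) g 0 = of_nat (fact k) * taylor_coeff g k"
      by (simp add: taylor_coeff_def)
    then show ?thesis using co[of k] by (simp add: nnc_mult nnc_fact)
  qed
  show ?case
  proof (cases n)
    case 0
    have "nnc (g 0)" using dg[of 0] by simp
    then show ?thesis using 0 by (simp add: nnc_def Im_exp Re_exp)
  next
    case (Suc m)
    have hE: "?E holomorphic_on UNIV" using hol by (intro holomorphic_intros)
    have hdg: "deriv g holomorphic_on UNIV" using hol by (intro holomorphic_deriv) auto
    have dE: "deriv ?E = (\<lambda>z. deriv g z * ?E z)"
    proof
      fix z
      have "(g has_field_derivative deriv g z) (at z)"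
        using hol by (auto intro!: DERIV_deriv_iff_field_differentiable[THEN iffD2]
          holomorphic_on_imp_differentiable_at)
      then have "(?E has_field_derivative exp (g z) * deriv g z) (at z)"
        by (rule DERIV_chain2[OF DERIV_exp])
      then show "deriv ?E z = deriv g z * ?E z" by (simp add: DERIV_imp_deriv mult.commute)
    qed
    have "(deriv ^^ n) ?E 0 = (deriv ^^ m) (deriv ?E) 0"
      by (simp add: Suc funpow_Suc_right del: funpow.simps)
    also have "\<dots> = (\<Sum>i = 0..m. of_nat (m choose i) * (deriv ^^ i) (deriv g) 0 * (deriv ^^ (m-i)) ?E 0)"
      unfolding dE by (rule higher_deriv_mult[OF hdg hE]) auto
    also have "\<dots> = (\<Sum>i = 0..m. of_nat (m choose i) * (deriv ^^ Suc i) g 0 * (deriv ^^ (m-i)) ?E 0)"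
      by (simp add: funpow_Suc_right del: funpow.simps)
    finally have eq: "(deriv ^^ n) ?E 0 = \<dots>" .
    show ?thesis unfolding eq
      by (intro nnc_sum nnc_mult nnc_of_nat dg less) (use Suc in auto)
  qed
qed



lemma moments_exp:
  fixes B A :: "nat \<Rightarrow> complex" and g :: "complex \<Rightarrow> complex"
  assumes gs: "\<And>z. (\<lambda>k. B k * z ^ k) sums g z"
    and es: "\<And>z. (\<lambda>n. A n * z ^ n) sums exp (g z)"
  defines "G1 \<equiv> \<lambda>z. \<Sum>k. of_nat k * B k * z ^ k"
  defines "G2 \<equiv> \<lambda>z. \<Sum>k. of_nat k * (of_nat k * B k) * z ^ k"
  shows "(\<lambda>k. of_nat k * B k * z ^ k) sums G1 z"
    and "(\<lambda>k. of_nat k * (of_nat k * B k) * z ^ k) sums G2 z"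
    and "(\<lambda>n. of_nat n * A n * z ^ n) sums (G1 z * exp (g z))"
    and "(\<lambda>n. of_nat n * (of_nat n * A n) * z ^ n) sums ((G2 z + G1 z * G1 z) * exp (g z))"
proof -
  have sB: "\<And>y. summable (\<lambda>k. B k * y ^ k)" using gs sums_summable by blast
  have sA: "\<And>y. summable (\<lambda>k. A k * y ^ k)" using es sums_summable by blast
  have gdef: "g = (\<lambda>z. \<Sum>k. B k * z ^ k)" using gs sums_unique by (auto simp: fun_eq_iff)
  have edef: "(\<lambda>z. exp (g z)) = (\<lambda>z. \<Sum>k. A k * z ^ k)" using es sums_unique by (auto simp: fun_eq_iff)
  define DB where "DB = (\<lambda>z. \<Sum>n. diffs B n * z ^ n)"
  define DA where "DA = (\<lambda>z. \<Sum>n. diffs A n * z ^ n)"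
  have dg: "(g has_field_derivative DB z) (at z)" for z
    unfolding gdef DB_def by (rule termdiffs_strong_converges_everywhere[OF sB])
  have dE1: "((\<lambda>z. exp (g z)) has_field_derivative DA z) (at z)" for z
    unfolding edef DA_def by (rule termdiffs_strong_converges_everywhere[OF sA])
  have dE2: "((\<lambda>z. exp (g z)) has_field_derivative exp (g z) * DB z) (at z)" for z
    by (rule DERIV_chain2[OF DERIV_exp dg])
  have DAeq: "DA z = exp (g z) * DB z" for z
    using DERIV_unique[OF dE1 dE2] .
  have G1s: "(\<lambda>k. of_nat k * B k * z ^ k) sums (z * DB z)" for z
    unfolding DB_def by (rule powser_nmul[OF sB])
  then have G1eq: "G1 z = z * DB z" for z
    unfolding G1_def using sums_unique by metis
  show G1sums: "(\<lambda>k. of_nat k * B k * z ^ k) sums G1 z" for z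
    using G1s G1eq by simp
  have sB1: "\<And>y. summable (\<lambda>k. (of_nat k * B k) * y ^ k)"
    using G1sums sums_summable by blast
  define DB1 where "DB1 = (\<lambda>z. \<Sum>n. diffs (\<lambda>k. of_nat k * B k) n * z ^ n)"
  have G2s: "(\<lambda>k. of_nat k * (of_nat k * B k) * z ^ k) sums (z * DB1 z)" for z
    unfolding DB1_def by (rule powser_nmul[OF sB1])
  then have G2eq: "G2 z = z * DB1 z" for z
    unfolding G2_def using sums_unique by metis
  show "(\<lambda>k. of_nat k * (of_nat k * B k) * z ^ k) sums G2 z"
    using G2s G2eq by simp
  have As: "(\<lambda>n. of_nat n * A n * z ^ n) sums (z * DA z)" for z
    unfolding DA_def by (rule powser_nmul[OF sA])
  show A1: "(\<lambda>n. of_nat n * A n * z ^ n) sums (G1 z * exp (g z))" for z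
    using As[of z] by (simp add: DAeq G1eq mult_ac)
  have sC: "\<And>y. summable (\<lambda>n. (of_nat n * A n) * y ^ n)"
    using A1 sums_summable by blast
  define DC where "DC = (\<lambda>z. \<Sum>n. diffs (\<lambda>n. of_nat n * A n) n * z ^ n)"
  have Cs: "(\<lambda>n. of_nat n * (of_nat n * A n) * z ^ n) sums (z * DC z)" for z
    unfolding DC_def by (rule powser_nmul[OF sC])
  have Hdef: "(\<lambda>z. G1 z * exp (g z)) = (\<lambda>z. \<Sum>n. (of_nat n * A n) * z ^ n)"
    using A1 sums_unique by (auto simp: fun_eq_iff)
  have dH1: "((\<lambda>z. G1 z * exp (g z)) has_field_derivative DC z) (at z)" for z
    unfolding Hdef DC_def by (rule termdiffs_strong_converges_everywhere[OF sC])
  have dG1: "(G1 has_field_derivative DB1 z) (at z)" for z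
  proof -
    have "G1 = (\<lambda>z. \<Sum>k. (of_nat k * B k) * z ^ k)" unfolding G1_def by simp
    then show ?thesis unfolding DB1_def by (simp only:) (rule termdiffs_strong_converges_everywhere[OF sB1])
  qed
  have dH2: "((\<lambda>z. G1 z * exp (g z)) has_field_derivative (DB1 z * exp (g z) + G1 z * (exp (g z) * DB z))) (at z)" for z
    using DERIV_mult[OF dG1 dE2[of z]] by (simp add: algebra_simps)
  have DCeq: "DC z = DB1 z * exp (g z) + G1 z * (exp (g z) * DB z)" for z
    using DERIV_unique[OF dH1 dH2] .
  show "(\<lambda>n. of_nat n * (of_nat n * A n) * z ^ n) sums ((G2 z + G1 z * G1 z) * exp (g z))"
    using Cs[of z] by (simp add: DCeq G2eq G1eq algebra_simps)
qed



lemma term_le_suminf: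
  fixes f :: "nat \<Rightarrow> real"
  assumes "summable f" "\<And>n. f n \<ge> 0"
  shows "f k \<le> suminf f"
  using sum_le_suminf[OF assms(1), of "{k}"] assms(2) by auto

lemma sq_le_four_pow: "real k * real k \<le> 4 ^ k"
proof -
  have "real k \<le> 2 ^ k" using of_nat_less_two_power[of k] by simp
  then have "real k * real k \<le> 2 ^ k * 2 ^ k" by (intro mult_mono) auto
  also have "\<dots> = 4 ^ k" by (simp add: power_mult_distrib[symmetric])
  finally show ?thesis .
qed

lemma S2_summable:
  fixes b :: "nat \<Rightarrow> real"
  assumes b0: "\<And>k. b k \<ge> 0" and bs: "\<And>r. summable (\<lambda>k. b k * r ^ k)" and t: "t \<ge> 0"
  shows "summable (\<lambda>k. real k * (real k * b k) * t ^ k)"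
proof (rule summable_comparison_test[OF _ bs[of "4 * t"]])
  show "\<exists>N. \<forall>n\<ge>N. norm (real n * (real n * b n) * t ^ n) \<le> b n * (4 * t) ^ n"
  proof (intro exI allI impI)
    fix n :: nat
    have "real n * (real n * b n) * t ^ n = (real n * real n) * (b n * t ^ n)" by simp
    also have "\<dots> \<le> 4 ^ n * (b n * t ^ n)"
      by (intro mult_right_mono sq_le_four_pow) (use b0 t in auto)
    finally show "norm (real n * (real n * b n) * t ^ n) \<le> b n * (4 * t) ^ n"
      using b0[of n] t by (simp add: power_mult_distrib mult_ac)
  qed
qed

lemma S2_at_top:
  fixes b :: "nat \<Rightarrow> real"
  assumes b0: "\<And>k. b k \<ge> 0" and bs: "\<And>r. summable (\<lambda>k. b k * r ^ k)"
    and j: "j > 0" "b j > 0"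
  shows "filterlim (\<lambda>t. \<Sum>k. real k * (real k * b k) * t ^ k) at_top at_top"
proof (rule filterlim_at_top_mono)
  show "filterlim (\<lambda>t. b j * t ^ j) at_top at_top"
    using j by (intro filterlim_tendsto_pos_mult_at_top[OF tendsto_const] filterlim_pow_at_top filterlim_ident) auto
  show "\<forall>\<^sub>F t in at_top. b j * t ^ j \<le> (\<Sum>k. real k * (real k * b k) * t ^ k)"
    using eventually_ge_at_top[of "0::real"]
  proof eventually_elim
    case (elim t)
    have "b j * t ^ j \<le> real j * (real j * b j) * t ^ j"
    proof -
      have "1 \<le> real j * real j" proof -
        have "1 \<le> real j" using j by simp
        then have "1 * 1 \<le> real j * real j" by (intro mult_mono) auto
        then show ?thesis by simp
      qed
      then have "1 * (b j * t ^ j) \<le> (real j * real j) * (b j * t ^ j)"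
        by (intro mult_right_mono) (use j elim in auto)
      then show ?thesis by (simp add: mult_ac)
    qed
    also have "\<dots> \<le> (\<Sum>k. real k * (real k * b k) * t ^ k)"
      by (rule term_le_suminf[OF S2_summable[OF b0 bs elim]]) (use b0 elim in auto)
    finally show ?case .
  qed
qed


lemma tail_lim:
  fixes b :: "nat \<Rightarrow> real" and \<rho> :: real
  assumes b0: "\<And>k. b k \<ge> 0" and bs: "\<And>r. summable (\<lambda>k. b k * r ^ k)"
    and j: "j > 0" "b j > 0" and rho: "\<rho> \<ge> 0"
    and ord: "(\<forall>D. \<exists>k>D. b k \<noteq> 0) \<Longrightarrow>
       eventually (\<lambda>r. ln (\<Sum>k. b k * r ^ k) \<le> r powr (\<rho> + 1)) at_top"
  defines "S2 \<equiv> \<lambda>t. \<Sum>k. real k * (real k * b k) * t ^ k"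
  defines "K \<equiv> \<lambda>t. nat \<lfloor>S2 t powr (1/4)\<rfloor>"
  shows "((\<lambda>t. \<Sum>k. if k > K t then real k * (real k * b k) * t ^ k else 0) \<longlongrightarrow> 0) at_top"
proof -
  have S2top: "filterlim S2 at_top at_top"
    unfolding S2_def by (rule S2_at_top[OF b0 bs j])
  show ?thesis
  proof (cases "\<forall>D. \<exists>k>D. b k \<noteq> 0")
    case False
    then obtain D where D: "\<And>k. k > D \<Longrightarrow> b k = 0" by auto
    have "eventually (\<lambda>t. S2 t \<ge> real D powr 4) at_top"
      using S2top by (simp add: filterlim_at_top)
    then have "eventually (\<lambda>t. (\<Sum>k. if k > K t then real k * (real k * b k) * t ^ k else 0) = 0) at_top"
    proof eventually_elim
      case (elim t)
      have "S2 t powr (1/4) \<ge> (real D powr 4) powr (1/4)"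
        using elim by (intro powr_mono2) auto
      also have "(real D powr 4) powr (1/4) = real D"
        by (subst powr_powr) simp
      finally have "K t \<ge> D" unfolding K_def by linarith
      then have "\<And>k. (if k > K t then real k * (real k * b k) * t ^ k else 0) = 0"
        using D by auto
      then show ?case by simp
    qed
    then show ?thesis by (rule tendsto_eventually)
  next
    case True
    note ordev = ord[OF True]
    obtain N where N: "N > nat \<lceil>4 * \<rho> + 9\<rceil>" "b N \<noteq> 0" using True by blast
    have bN: "b N > 0" using N b0[of N] by simp
    have NN: "real N \<ge> 4 * \<rho> + 9" using N by linarith
    have ev1: "eventually (\<lambda>t. S2 t \<ge> t powr (4 * \<rho> + 8)) at_top"
      using eventually_ge_at_top[of "max 1 (1 / b N)"]
    proof eventually_elim
      case (elim t)
      have t1: "t \<ge> 1" and tb: "t \<ge> 1 / b N" using elim by auto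
      have "t powr (4 * \<rho> + 8) \<le> b N * t * t powr (4 * \<rho> + 8)"
      proof -
        have "1 \<le> b N * t" using tb bN by (simp add: field_simps)
        then show ?thesis using mult_right_mono[of 1 "b N * t" "t powr (4 * \<rho> + 8)"] by simp
      qed
      also have "\<dots> = b N * (t powr 1 * t powr (4 * \<rho> + 8))" using t1 by simp
      also have "\<dots> \<le> b N * (t powr (real N - (4 * \<rho> + 8)) * t powr (4 * \<rho> + 8))"
        using t1 NN bN by (intro mult_left_mono mult_right_mono powr_mono) auto
      also have "\<dots> = b N * t ^ N"
        using t1 by (simp add: powr_add[symmetric] powr_realpow)
      also have "\<dots> \<le> real N * (real N * b N) * t ^ N"
      proof -
        have "1 \<le> real N" using NN rho by simp
        then have "1 * 1 \<le> real N * real N" by (intro mult_mono) auto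
        then have "1 * (b N * t ^ N) \<le> (real N * real N) * (b N * t ^ N)"
          by (intro mult_right_mono) (use bN t1 in auto)
        then show ?thesis by (simp add: mult_ac)
      qed
      also have "\<dots> \<le> S2 t"
        unfolding S2_def by (rule term_le_suminf[OF S2_summable[OF b0 bs]]) (use b0 t1 in auto)
      finally show ?case .
    qed
    have ev2: "eventually (\<lambda>t. ln (\<Sum>k. b k * (16 * t) ^ k) \<le> (16 * t) powr (\<rho> + 1)) at_top"
    proof -
      have "filterlim (\<lambda>t::real. 16 * t) at_top at_top" by real_asymp
      from filterlim_iff[THEN iffD1, OF this, rule_format, OF ordev] show ?thesis by simp
    qed
    have ev3: "eventually (\<lambda>t. (\<Sum>k. if k > K t then real k * (real k * b k) * t ^ k else 0)
        \<le> 2 * exp ((16 * t) powr (\<rho> + 1) - ln 2 * t powr (\<rho> + 2) + ln 2)) at_top"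
      using ev1 ev2 eventually_ge_at_top[of "1::real"]
    proof eventually_elim
      case (elim t)
      have t1: "t \<ge> 1" using elim by simp
      define G where "G = (\<Sum>k. b k * (16 * t) ^ k)"
      have Gt: "b k * (16 * t) ^ k \<le> G" for k
        unfolding G_def by (rule term_le_suminf[OF bs]) (use b0 t1 in auto)
      have "b j * (16 * t) ^ j > 0" using j t1 by simp
      then have Gpos: "G > 0" using Gt[of j] by linarith
      have lnG: "ln G \<le> (16 * t) powr (\<rho> + 1)" using elim unfolding G_def by simp
      have "G = exp (ln G)" using Gpos by simp
      also have "\<dots> \<le> exp ((16 * t) powr (\<rho> + 1))" using lnG by simp
      finally have Gle: "G \<le> exp ((16 * t) powr (\<rho> + 1))" .
      have Kge: "real (K t) \<ge> t powr (\<rho> + 2) - 1"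
      proof -
        have "S2 t powr (1/4) \<ge> (t powr (4 * \<rho> + 8)) powr (1/4)"
          using elim by (intro powr_mono2) auto
        also have "(t powr (4 * \<rho> + 8)) powr (1/4) = t powr (\<rho> + 2)"
          by (simp add: powr_powr algebra_simps)
        finally show ?thesis unfolding K_def by linarith
      qed
      have termb: "(if k > K t then real k * (real k * b k) * t ^ k else 0)
          \<le> G * (1/2) ^ K t * (1/2) ^ k" for k
      proof (cases "k > K t")
        case True
        have "real k * (real k * b k) * t ^ k \<le> 4 ^ k * (b k * t ^ k)"
        proof -
          have "real k * (real k * b k) * t ^ k = (real k * real k) * (b k * t ^ k)" by simp
          also have "\<dots> \<le> 4 ^ k * (b k * t ^ k)"
            by (intro mult_right_mono sq_le_four_pow) (use b0 t1 in auto)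
          finally show ?thesis .
        qed
        also have "\<dots> = (b k * (16 * t) ^ k) * (1/4) ^ k"
          by (simp add: power_mult_distrib power_divide field_simps)
            (simp add: power_mult_distrib[symmetric])
        also have "\<dots> \<le> G * (1/4) ^ k"
          by (intro mult_right_mono Gt) auto
        also have "(1/4::real) ^ k = (1/2) ^ k * (1/2) ^ k"
          by (simp add: power_mult_distrib[symmetric])
        also have "G * \<dots> \<le> G * ((1/2) ^ K t * (1/2) ^ k)"
          using True Gpos by (intro mult_left_mono mult_right_mono power_decreasing) auto
        finally show ?thesis using True by (simp add: mult_ac)
      qed (use Gpos in auto)
      have "(\<Sum>k. if k > K t then real k * (real k * b k) * t ^ k else 0)
           \<le> (\<Sum>k. G * (1/2) ^ K t * (1/2) ^ k)"
      proof (rule suminf_le[OF termb])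
        show "summable (\<lambda>k. G * (1/2) ^ K t * (1/2::real) ^ k)"
          by (intro summable_mult summable_geometric) auto
        show "summable (\<lambda>k. if k > K t then real k * (real k * b k) * t ^ k else 0)"
          by (rule summable_comparison_test[OF _ S2_summable[OF b0 bs, of t]]) (use b0 t1 in auto)
      qed
      also have "\<dots> = G * (1/2) ^ K t * 2"
        using suminf_geometric[of "1/2::real"] by (subst suminf_mult) auto
      also have "\<dots> \<le> exp ((16 * t) powr (\<rho> + 1)) * exp (- ln 2 * (t powr (\<rho> + 2) - 1)) * 2"
      proof -
        have "(1/2::real) ^ K t = exp (- ln 2 * real (K t))"
        proof -
          have "(1/2::real) ^ K t = (1/2) powr real (K t)" by (simp add: powr_realpow)
          also have "\<dots> = exp (real (K t) * ln (1/2))" by (simp add: powr_def)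
          also have "ln (1/2::real) = - ln 2" by (simp add: ln_div)
          finally show ?thesis by (simp add: mult.commute)
        qed
        also have "\<dots> \<le> exp (- ln 2 * (t powr (\<rho> + 2) - 1))"
          using Kge by simp
        finally have "(1/2::real) ^ K t \<le> exp (- ln 2 * (t powr (\<rho> + 2) - 1))" .
        then show ?thesis using Gle Gpos by (intro mult_right_mono mult_mono) auto
      qed
      also have "\<dots> = 2 * exp ((16 * t) powr (\<rho> + 1) - ln 2 * t powr (\<rho> + 2) + ln 2)"
        by (simp add: exp_add[symmetric] algebra_simps)
      finally show ?case .
    qed
    have lim: "((\<lambda>t. 2 * exp ((16 * t) powr (\<rho> + 1) - ln 2 * t powr (\<rho> + 2) + ln 2)) \<longlongrightarrow> 0) at_top"
      using rho by real_asymp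
    have ev0: "eventually (\<lambda>t. 0 \<le> (\<Sum>k. if k > K t then real k * (real k * b k) * t ^ k else 0)) at_top"
      using eventually_ge_at_top[of "0::real"]
      by eventually_elim (intro suminf_nonneg summable_comparison_test[OF _ S2_summable[OF b0 bs]], auto simp: b0)
    show ?thesis
      by (rule tendsto_sandwich[OF ev0 ev3 tendsto_const lim])
  qed
qed


lemma R_bound:
  fixes x :: real
  shows "cmod (iexp x - (\<Sum>i\<le>2. (\<i> * x) ^ i / fact i)) \<le> \<bar>x\<bar> ^ 3 / 6"
    and "cmod (iexp x - (\<Sum>i\<le>2. (\<i> * x) ^ i / fact i)) \<le> x * x"
proof -
  show "cmod (iexp x - (\<Sum>i\<le>2. (\<i> * x) ^ i / fact i)) \<le> \<bar>x\<bar> ^ 3 / 6"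
    using iexp_approx1[of x 2] by (simp add: numeral_3_eq_3 fact_numeral)
  show "cmod (iexp x - (\<Sum>i\<le>2. (\<i> * x) ^ i / fact i)) \<le> x * x"
    using iexp_approx2[of x 2] by (simp add: power2_eq_square)
qed

lemma core_lim:
  fixes b :: "nat \<Rightarrow> real" and \<rho> \<theta> :: real
  assumes b0: "\<And>k. b k \<ge> 0" and bs: "\<And>r. summable (\<lambda>k. b k * r ^ k)"
    and j: "j > 0" "b j > 0" and rho: "\<rho> \<ge> 0"
    and ord: "(\<forall>D. \<exists>k>D. b k \<noteq> 0) \<Longrightarrow>
       eventually (\<lambda>r. ln (\<Sum>k. b k * r ^ k) \<le> r powr (\<rho> + 1)) at_top"
  defines "S2 \<equiv> \<lambda>t. \<Sum>k. real k * (real k * b k) * t ^ k"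
  defines "u \<equiv> \<lambda>t. \<theta> / sqrt (S2 t)"
  shows "((\<lambda>t. \<Sum>k. complex_of_real (b k * t ^ k) *
      (iexp (real k * u t) - (\<Sum>i\<le>2. (\<i> * (real k * u t)) ^ i / fact i))) \<longlongrightarrow> 0) at_top"
proof -
  define K where "K = (\<lambda>t. nat \<lfloor>S2 t powr (1/4)\<rfloor>)"
  define X where "X = (\<lambda>k t. real k * (real k * b k) * t ^ k)"
  define T where "T = (\<lambda>t. \<Sum>k. if k > K t then X k t else 0)"
  have S2top: "filterlim S2 at_top at_top"
    unfolding S2_def by (rule S2_at_top[OF b0 bs j])
  have Tlim: "(T \<longlongrightarrow> 0) at_top"
    unfolding T_def X_def K_def S2_def by (rule tail_lim[OF b0 bs j rho ord])
  have Xs: "summable (\<lambda>k. X k t)" if "t \<ge> 0" for t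
    unfolding X_def by (rule S2_summable[OF b0 bs that])
  have X0: "X k t \<ge> 0" if "t \<ge> 0" for k t
    unfolding X_def using b0[of k] that by simp
  have Ts: "summable (\<lambda>k. if k > K t then X k t else 0)" if "t \<ge> 0" for t
    by (rule summable_comparison_test[OF _ Xs[OF that]]) (use X0 that in auto)
  have S2X: "S2 t = (\<Sum>k. X k t)" for t unfolding S2_def X_def by simp
  define Bd where "Bd = (\<lambda>t. \<theta>\<^sup>2 * (real (K t) * \<bar>u t\<bar> / 6) + \<theta>\<^sup>2 * (T t / S2 t))"
  have ev_bound: "eventually (\<lambda>t. norm (\<Sum>k. complex_of_real (b k * t ^ k) *
      (iexp (real k * u t) - (\<Sum>i\<le>2. (\<i> * (real k * u t)) ^ i / fact i))) \<le> Bd t) at_top"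
    using eventually_ge_at_top[of "1::real"] filterlim_at_top_dense[THEN iffD1, OF S2top, rule_format, of 0]
  proof eventually_elim
    case (elim t)
    have t0: "t \<ge> 0" and S2pos: "S2 t > 0" using elim by auto
    define U where "U = u t"
    define KK where "KK = K t"
    let ?R = "\<lambda>k. iexp (real k * U) - (\<Sum>i\<le>2. (\<i> * (real k * U)) ^ i / fact i)"
    define gb where "gb = (\<lambda>k. X k t * (U * U * (real KK * \<bar>U\<bar> / 6)) + U * U * (if k > KK then X k t else 0))"
    have tb: "norm (complex_of_real (b k * t ^ k) * ?R k) \<le> gb k" for k
    proof -
      have Rb: "norm (?R k) \<le> real k * real k * (U * U) * (real KK * \<bar>U\<bar> / 6)
                 + U * U * (if k > KK then real k * real k else 0)"
      proof (cases "k > KK")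
        case True
        have "norm (?R k) \<le> (real k * U) * (real k * U)" by (rule R_bound(2))
        moreover have "0 \<le> real k * real k * (U * U) * (real KK * \<bar>U\<bar> / 6)" by simp
        ultimately show ?thesis using True by (simp add: algebra_simps)
      next
        case False
        have "norm (?R k) \<le> \<bar>real k * U\<bar> ^ 3 / 6" by (rule R_bound(1))
        also have "\<dots> = real k * real k * (U * U) * (real k * \<bar>U\<bar> / 6)"
        proof -
          have "\<bar>real k * U\<bar> ^ 3 = (real k * \<bar>U\<bar>) * (real k * \<bar>U\<bar>) * (real k * \<bar>U\<bar>)"
            by (simp add: abs_mult power3_eq_cube)
          also have "\<dots> = real k * real k * (\<bar>U\<bar> * \<bar>U\<bar>) * (real k * \<bar>U\<bar>)"
            by (simp only: mult_ac)
          also have "\<bar>U\<bar> * \<bar>U\<bar> = U * U" by (rule abs_mult_self_eq)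
          finally show ?thesis by simp
        qed
        also have "\<dots> \<le> real k * real k * (U * U) * (real KK * \<bar>U\<bar> / 6)"
          using False by (intro mult_left_mono divide_right_mono mult_right_mono) auto
        finally show ?thesis using False by simp
      qed
      have "norm (complex_of_real (b k * t ^ k) * ?R k) = (b k * t ^ k) * norm (?R k)"
        using b0[of k] t0 by (simp only: norm_mult norm_of_real) simp
      also have "\<dots> \<le> (b k * t ^ k) * (real k * real k * (U * U) * (real KK * \<bar>U\<bar> / 6)
                 + U * U * (if k > KK then real k * real k else 0))"
        using Rb b0[of k] t0 by (intro mult_left_mono) auto
      also have "\<dots> = gb k"
        unfolding gb_def X_def by (simp add: algebra_simps)
      finally show ?thesis .
    qed
    have gbs: "summable gb"
      unfolding gb_def using Xs[OF t0] Ts[OF t0, unfolded KK_def[symmetric]]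
      by (intro summable_add summable_mult2 summable_mult) auto
    have "norm (\<Sum>k. complex_of_real (b k * t ^ k) * ?R k) \<le> suminf gb"
      by (rule norm_suminf_le[OF tb gbs])
    also have "suminf gb = S2 t * (U * U * (real KK * \<bar>U\<bar> / 6)) + U * U * T t"
      unfolding gb_def T_def KK_def S2X
      using suminf_add[OF summable_mult2[OF Xs[OF t0]] summable_mult[OF Ts[OF t0]],
          of "U * U * (real (K t) * \<bar>U\<bar> / 6)" "U * U"]
        suminf_mult2[OF Xs[OF t0], of "U * U * (real (K t) * \<bar>U\<bar> / 6)"]
        suminf_mult[OF Ts[OF t0], of "U * U"]
      by simp
    also have "\<dots> = Bd t"
    proof -
      have UU: "U * U = \<theta>\<^sup>2 / S2 t"
        using S2pos unfolding U_def u_def by (simp add: power2_eq_square)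
      show ?thesis
        unfolding Bd_def U_def[symmetric] KK_def[symmetric] UU using S2pos by simp
    qed
    finally show ?case unfolding U_def .
  qed
  have Ku: "((\<lambda>t. real (K t) * \<bar>u t\<bar>) \<longlongrightarrow> 0) at_top"
  proof -
    have l: "((\<lambda>x. \<bar>\<theta>\<bar> / x powr (1/4)) \<longlongrightarrow> 0) at_top" by real_asymp
    have up: "((\<lambda>t. \<bar>\<theta>\<bar> / S2 t powr (1/4)) \<longlongrightarrow> 0) at_top"
      by (rule filterlim_compose[OF l S2top])
    have lo: "eventually (\<lambda>t. 0 \<le> real (K t) * \<bar>u t\<bar>) at_top" by simp
    have hi: "eventually (\<lambda>t. real (K t) * \<bar>u t\<bar> \<le> \<bar>\<theta>\<bar> / S2 t powr (1/4)) at_top"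
      using filterlim_at_top_dense[THEN iffD1, OF S2top, rule_format, of 0]
    proof eventually_elim
      case (elim t)
      have Kle: "real (K t) \<le> S2 t powr (1/4)"
        unfolding K_def using elim by simp
      have sq: "sqrt (S2 t) = S2 t powr (1/4) * S2 t powr (1/4)"
        using elim by (simp add: sqrt_def root_powr_inverse powr_add[symmetric])
      have "real (K t) * \<bar>u t\<bar> \<le> S2 t powr (1/4) * (\<bar>\<theta>\<bar> / sqrt (S2 t))"
      proof -
        have "\<bar>u t\<bar> = \<bar>\<theta>\<bar> / sqrt (S2 t)" unfolding u_def using elim by (simp add: abs_divide)
        then show ?thesis using Kle by (simp only:) (rule mult_right_mono, auto)
      qed
      also have "\<dots> = \<bar>\<theta>\<bar> / S2 t powr (1/4)"
        unfolding sq using elim by (simp add: field_simps)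
      finally show ?case .
    qed
    show ?thesis by (rule tendsto_sandwich[OF lo hi tendsto_const up])
  qed
  have TS: "((\<lambda>t. T t / S2 t) \<longlongrightarrow> 0) at_top"
    by (rule tendsto_divide_0[OF Tlim filterlim_at_top_imp_at_infinity[OF S2top]])
  have "(Bd \<longlongrightarrow> \<theta>\<^sup>2 * (0 / 6) + \<theta>\<^sup>2 * 0) at_top"
    unfolding Bd_def by (intro tendsto_intros Ku TS) simp
  then have Bdl: "(Bd \<longlongrightarrow> 0) at_top" by simp
  show ?thesis
    by (rule Lim_null_comparison[OF ev_bound Bdl])
qed


lemma order_bound:
  fixes g :: "complex \<Rightarrow> complex" and G :: "real \<Rightarrow> real"
  assumes hol: "g holomorphic_on UNIV" and ord: "entire_order g = ereal \<rho>"
    and gG: "\<And>r. r \<ge> 0 \<Longrightarrow> g (of_real r) = of_real (G r)"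
    and Gpos: "\<And>r. r > 0 \<Longrightarrow> G r > 0"
  shows "eventually (\<lambda>r. ln (G r) \<le> r powr (\<rho> + 1)) at_top"
proof -
  have "Limsup at_top (\<lambda>r. ereal (ln (ln (max_modulus g r)) / ln r)) < ereal (\<rho> + 1)"
    using ord unfolding entire_order_def by simp
  then have ev: "eventually (\<lambda>r. ereal (ln (ln (max_modulus g r)) / ln r) < ereal (\<rho> + 1)) at_top"
    by (rule Limsup_lessD)
  show ?thesis
    using ev eventually_gt_at_top[of "1::real"]
  proof eventually_elim
    case (elim r)
    have r1: "r > 1" using elim by simp
    have lnr: "ln r > 0" using r1 by simp
    have bdd: "bdd_above ((\<lambda>z. norm (g z)) ` {z. norm z = r})"
    proof -
      have "compact ((\<lambda>z. norm (g z)) ` sphere 0 r)"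
        by (intro compact_continuous_image continuous_intros compact_sphere
            holomorphic_on_imp_continuous_on[OF holomorphic_on_subset[OF hol]]) auto
      then show ?thesis by (intro bounded_imp_bdd_above compact_imp_bounded) (simp add: sphere_def dist_norm)
    qed
    have "norm (g (of_real r)) \<le> max_modulus g r"
      unfolding max_modulus_def by (rule cSUP_upper[OF _ bdd]) (use r1 in simp)
    then have GM: "G r \<le> max_modulus g r"
      using gG[of r] Gpos[of r] r1 by simp
    have Gp: "G r > 0" using Gpos r1 by simp
    have lnGM: "ln (G r) \<le> ln (max_modulus g r)" using GM Gp by simp
    show ?case
    proof (cases "ln (max_modulus g r) \<le> 0")
      case True
      then show ?thesis using lnGM by (smt (verit) powr_ge_zero)
    next
      case False
      have "ln (ln (max_modulus g r)) / ln r < \<rho> + 1" using elim by simp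
      then have "ln (ln (max_modulus g r)) < (\<rho> + 1) * ln r" using lnr by (simp add: field_simps)
      then have "exp (ln (ln (max_modulus g r))) < exp ((\<rho> + 1) * ln r)" by simp
      then have "ln (max_modulus g r) < r powr (\<rho> + 1)"
        using False r1 by (simp add: powr_def)
      then show ?thesis using lnGM by simp
    qed
  qed
qed

lemma real_sums:
  fixes r :: "nat \<Rightarrow> real"
  assumes "(\<lambda>k. complex_of_real (r k)) sums S"
  shows "r sums Re S" "S = complex_of_real (Re S)"
proof -
  show "r sums Re S" using sums_Re[OF assms] by simp
  have "(\<lambda>k. 0::real) sums Im S" using sums_Im[OF assms] by simp
  then have "Im S = 0" using sums_unique sums_zero by fastforce
  then show "S = complex_of_real (Re S)" by (simp add: complex_eq_iff)
qed

lemma sum_le2: "(\<Sum>i\<le>(2::nat). (\<i> * z) ^ i / fact i) = 1 + \<i> * z - z ^ 2 / 2"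
  by (simp add: numeral_2_eq_2 power2_eq_square algebra_simps)




lemma nnc_div_fact: "nnc d \<Longrightarrow> nnc (d / of_nat m)"
proof -
  assume "nnc d"
  moreover have "d / of_nat m = d * complex_of_real (1 / real m)" by (simp add: divide_inverse)
  moreover have "nnc (complex_of_real (1 / real m))" by (simp add: nnc_def)
  ultimately show ?thesis by (metis nnc_mult)
qed

lemma iexp_split: "iexp (\<theta> * ((real n - m) / s)) = exp (\<i> * of_real (\<theta> / s)) ^ n * iexp (- (m * (\<theta> / s)))"
proof -
  define v where "v = \<theta> / s"
  have e: "\<theta> * ((real n - m) / s) = real n * v + (- (m * v))"
    unfolding v_def by (cases "s = 0") (simp_all add: field_simps)
  have "iexp (\<theta> * ((real n - m) / s)) = iexp (real n * v) * iexp (- (m * v))"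
    by (simp only: e of_real_add distrib_left exp_add)
  also have "iexp (real n * v) = exp (of_nat n * (\<i> * of_real v))" by (simp add: mult_ac)
  also have "\<dots> = exp (\<i> * of_real v) ^ n" by (rule exp_of_nat_mult)
  finally show ?thesis unfolding v_def .
qed

lemma var_expand: "x * (x * c) * p - 2 * m * (x * c * p) + m * m * (c * p) = (x - m)\<^sup>2 * c * (p::real)"
  by (simp add: power2_eq_square algebra_simps)

lemma trm_alg:
  fixes P X :: complex and \<kappa> v :: real
  shows "P * (X - (1 + \<i> * of_real (\<kappa> * v) - (of_real (\<kappa> * v))\<^sup>2 / 2))
    = P * X - P - \<i> * of_real v * (of_real \<kappa> * P) + of_real (v * v / 2) * (of_real \<kappa> * (of_real \<kappa> * P))"
  by (simp add: power2_eq_square field_simps)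

theorem corollary4p12:
  fixes g :: "complex \<Rightarrow> complex" and \<rho> :: real
  assumes entire: "g holomorphic_on UNIV"
    and nonconst: "\<not> (\<exists>c. \<forall>z. g z = c)"
    and order: "entire_order g = ereal \<rho>" and "\<rho> \<ge> 0"
    and coeffs: "\<forall>n. Im (taylor_coeff g n) = 0 \<and> Re (taylor_coeff g n) \<ge> 0"
  shows "gaussian (\<lambda>n. Re (taylor_coeff (\<lambda>z. exp (g z)) n))"
proof -
  note rho = \<open>\<rho> \<ge> 0\<close>
  define E where "E = (\<lambda>z. exp (g z))"
  define B where "B = taylor_coeff g"
  define b where "b = (\<lambda>k. Re (B k))"
  define A where "A = taylor_coeff E"
  define a where "a = (\<lambda>n. Re (A n))"
  have a_eq: "(\<lambda>n. Re (taylor_coeff (\<lambda>z. exp (g z)) n)) = a" unfolding a_def A_def E_def ..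
  have nncB: "nnc (B k)" for k using coeffs unfolding B_def nnc_def by auto
  have Bb: "B k = of_real (b k)" for k using nncB[of k] by (simp add: b_def nnc_def complex_eq_iff)
  have b0: "b k \<ge> 0" for k using nncB[of k] by (simp add: b_def nnc_def)
  have hE: "E holomorphic_on UNIV" unfolding E_def using entire by (intro holomorphic_intros)
  have nncA: "nnc (A n)" for n
  proof -
    have "nnc ((deriv ^^ n) (\<lambda>z. exp (g z)) 0)"
      by (rule exp_coeff_nnc[OF entire]) (use nncB in \<open>simp add: B_def\<close>)
    then show ?thesis unfolding A_def taylor_coeff_def E_def by (rule nnc_div_fact)
  qed
  have Aa: "A n = of_real (a n)" for n using nncA[of n] by (simp add: a_def nnc_def complex_eq_iff)
  have a0: "a n \<ge> 0" for n using nncA[of n] by (simp add: a_def nnc_def)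
  have gs: "(\<lambda>k. B k * z ^ k) sums g z" for z unfolding B_def by (rule taylor_sums[OF entire])
  have es: "(\<lambda>n. A n * z ^ n) sums exp (g z)" for z
    using taylor_sums[OF hE, of z] by (simp add: A_def E_def)
  note mom = moments_exp[OF gs es]
  define G1 where "G1 = (\<lambda>z. \<Sum>k. of_nat k * B k * z ^ k)"
  define G2 where "G2 = (\<lambda>z. \<Sum>k. of_nat k * (of_nat k * B k) * z ^ k)"
  define gr where "gr = (\<lambda>t. Re (g (of_real t)))"
  define S1 where "S1 = (\<lambda>t. \<Sum>k. real k * b k * t ^ k)"
  define S2 where "S2 = (\<lambda>t. \<Sum>k. real k * (real k * b k) * t ^ k)"
  have gr_sums: "(\<lambda>k. b k * t ^ k) sums gr t" and g_real: "g (of_real t) = of_real (gr t)" for t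
  proof -
    have "(\<lambda>k. complex_of_real (b k * t ^ k)) sums g (of_real t)"
      using gs[of "of_real t"] by (simp add: Bb)
    from real_sums[OF this] show "(\<lambda>k. b k * t ^ k) sums gr t" "g (of_real t) = of_real (gr t)"
      unfolding gr_def by auto
  qed
  have bs: "summable (\<lambda>k. b k * r ^ k)" for r using gr_sums sums_summable by blast
  have S1_sums: "(\<lambda>k. real k * b k * t ^ k) sums S1 t" and G1_real: "G1 (of_real t) = of_real (S1 t)" for t
  proof -
    have "(\<lambda>k. complex_of_real (real k * b k * t ^ k)) sums G1 (of_real t)"
      using mom(1)[of "of_real t"] by (simp add: Bb G1_def)
    from real_sums[OF this] have "(\<lambda>k. real k * b k * t ^ k) sums Re (G1 (of_real t))"
      "G1 (of_real t) = of_real (Re (G1 (of_real t)))" by auto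
    then show "(\<lambda>k. real k * b k * t ^ k) sums S1 t" "G1 (of_real t) = of_real (S1 t)"
      unfolding S1_def using sums_unique by metis+
  qed
  have S2_sums: "(\<lambda>k. real k * (real k * b k) * t ^ k) sums S2 t" and G2_real: "G2 (of_real t) = of_real (S2 t)" for t
  proof -
    have "(\<lambda>k. complex_of_real (real k * (real k * b k) * t ^ k)) sums G2 (of_real t)"
      using mom(2)[of "of_real t"] by (simp add: Bb G2_def)
    from real_sums[OF this] have "(\<lambda>k. real k * (real k * b k) * t ^ k) sums Re (G2 (of_real t))"
      "G2 (of_real t) = of_real (Re (G2 (of_real t)))" by auto
    then show "(\<lambda>k. real k * (real k * b k) * t ^ k) sums S2 t" "G2 (of_real t) = of_real (S2 t)"
      unfolding S2_def using sums_unique by metis+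
  qed
  have a_sums0: "(\<lambda>n. a n * t ^ n) sums exp (gr t)" for t
  proof -
    have "(\<lambda>n. complex_of_real (a n * t ^ n)) sums complex_of_real (exp (gr t))"
      using es[of "of_real t"] by (simp add: Aa g_real exp_of_real)
    from real_sums(1)[OF this] show ?thesis by simp
  qed
  have a_sums1: "(\<lambda>n. real n * a n * t ^ n) sums (S1 t * exp (gr t))" for t
  proof -
    have "(\<lambda>n. complex_of_real (real n * a n * t ^ n)) sums complex_of_real (S1 t * exp (gr t))"
      using mom(3)[of "of_real t"] by (simp add: Aa g_real G1_real[unfolded G1_def] exp_of_real)
    from real_sums(1)[OF this] show ?thesis by simp
  qed
  have a_sums2: "(\<lambda>n. real n * (real n * a n) * t ^ n) sums ((S2 t + S1 t * S1 t) * exp (gr t))" for t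
  proof -
    have "(\<lambda>n. complex_of_real (real n * (real n * a n) * t ^ n)) sums complex_of_real ((S2 t + S1 t * S1 t) * exp (gr t))"
      using mom(4)[of "of_real t"] by (simp add: Aa g_real G1_real[unfolded G1_def] G2_real[unfolded G2_def] exp_of_real)
    from real_sums(1)[OF this] show ?thesis by simp
  qed
  obtain j where j: "j > 0" "b j > 0"
  proof -
    have "\<exists>j>0. b j > 0"
    proof (rule ccontr)
      assume "\<not> (\<exists>j>0. b j > 0)"
      then have bz: "b k = 0" if "k > 0" for k
      proof -
        have "\<not> b k > 0" using that \<open>\<not> (\<exists>j>0. b j > 0)\<close> by blast
        then show ?thesis using b0[of k] by simp
      qed
      have "g z = B 0" for z
      proof -
        have "(\<lambda>k. B k * z ^ k) = (\<lambda>k. if k = 0 then B 0 else 0)"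
          using bz by (auto simp: fun_eq_iff Bb)
        moreover have "(\<lambda>k. if k = 0 then B 0 else 0) sums B 0"
          using sums_single[of 0 "\<lambda>_. B 0"] by simp
        ultimately have "(\<lambda>k. B k * z ^ k) sums B 0" by simp
        then show ?thesis using sums_unique2[OF gs[of z]] by simp
      qed
      then show False using nonconst by blast
    qed
    then show ?thesis using that by blast
  qed
  have grpos: "gr r > 0" if "r > 0" for r
  proof -
    have "b j * r ^ j \<le> (\<Sum>k. b k * r ^ k)"
      by (rule term_le_suminf[OF bs]) (use b0 that in auto)
    moreover have "b j * r ^ j > 0" using j that by simp
    ultimately show ?thesis using sums_unique[OF gr_sums[of r]] by simp
  qed
  have ordb: "eventually (\<lambda>r. ln (\<Sum>k. b k * r ^ k) \<le> r powr (\<rho> + 1)) at_top"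
  proof -
    have "eventually (\<lambda>r. ln (gr r) \<le> r powr (\<rho> + 1)) at_top"
      by (rule order_bound[OF entire order g_real grpos])
    then show ?thesis using sums_unique[OF gr_sums] by simp
  qed
  have pv: "ps_val a t = exp (gr t)" for t
    unfolding ps_val_def using sums_unique[OF a_sums0[of t]] by simp
  have pm: "ps_mean a t = S1 t" for t
    unfolding ps_mean_def pv using sums_unique[OF a_sums1[of t], symmetric] by simp
  have S2pos: "S2 t > 0" if "t > 0" for t
  proof -
    have "real j * (real j * b j) * t ^ j \<le> S2 t"
      unfolding S2_def by (rule term_le_suminf[OF S2_summable[OF b0 bs]]) (use b0 that in auto)
    moreover have "real j * (real j * b j) * t ^ j > 0" using j that by simp
    ultimately show ?thesis by simp
  qed
  have ps: "ps_sigma a t = sqrt (S2 t)" for t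
  proof -
    define m where "m = S1 t"
    define F where "F = exp (gr t)"
    have "(\<lambda>n. real n * (real n * a n) * t ^ n - 2 * m * (real n * a n * t ^ n) + m * m * (a n * t ^ n))
        sums ((S2 t + S1 t * S1 t) * F - 2 * m * (S1 t * F) + m * m * F)"
      unfolding F_def by (intro sums_add sums_diff sums_mult a_sums0 a_sums1 a_sums2)
    moreover have "(\<lambda>n. real n * (real n * a n) * t ^ n - 2 * m * (real n * a n * t ^ n) + m * m * (a n * t ^ n))
        = (\<lambda>n. (real n - m)\<^sup>2 * a n * t ^ n)"
      by (rule ext, rule var_expand)
    moreover have "(S2 t + S1 t * S1 t) * F - 2 * m * (S1 t * F) + m * m * F = S2 t * F"
      unfolding m_def by (simp add: algebra_simps)
    ultimately have "(\<lambda>n. (real n - m)\<^sup>2 * a n * t ^ n) sums (S2 t * F)" by simp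
    then have "(\<Sum>n. (real n - m)\<^sup>2 * a n * t ^ n) = S2 t * F" by (rule sums_unique[symmetric])
    moreover have "F > 0" unfolding F_def by simp
    ultimately show ?thesis unfolding ps_sigma_def pm pv m_def[symmetric] F_def[symmetric] by simp
  qed
  define M where "M = (\<lambda>t. distr (density (count_space UNIV) (\<lambda>n. ennreal (a n * t ^ n / ps_val a t))) borel
     (\<lambda>n. (real n - ps_mean a t) / ps_sigma a t))"
  have w0: "a n * t ^ n / ps_val a t \<ge> 0" if "t > 0" for t n
    using a0[of n] that by (simp add: pv)
  have ws: "(\<lambda>n. a n * t ^ n / ps_val a t) sums 1" for t
    using sums_divide[OF a_sums0[of t], of "exp (gr t)"] by (simp add: pv)
  have Mdist: "real_distribution (M t)" if "t > 0" for t
    unfolding M_def by (rule wdist(1)[OF w0[OF that] ws])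
  have Mcdf: "cdf (M t) x = ps_normalized_cdf a t x" if "t > 0" for t x
  proof -
    have "cdf (M t) x = (\<Sum>n. if (real n - ps_mean a t) / ps_sigma a t \<le> x then a n * t ^ n / ps_val a t else 0)"
      unfolding M_def by (rule wdist(2)[OF w0[OF that] ws])
    also have "\<dots> = (\<Sum>n. (if (real n - ps_mean a t) / ps_sigma a t \<le> x then a n * t ^ n else 0) / ps_val a t)"
      by (intro suminf_cong) auto
    also have "\<dots> = ps_normalized_cdf a t x"
      unfolding ps_normalized_cdf_def
    proof (rule suminf_divide)
      show "summable (\<lambda>n. if (real n - ps_mean a t) / ps_sigma a t \<le> x then a n * t ^ n else 0)"
        by (rule summable_comparison_test[OF _ sums_summable[OF a_sums0[of t]]]) (use a0 that in auto)
    qed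
    finally show ?thesis .
  qed
  define C where "C = (\<lambda>\<theta> t. \<Sum>k. complex_of_real (b k * t ^ k) *
      (iexp (real k * (\<theta> / sqrt (S2 t))) - (\<Sum>i\<le>2. (\<i> * (real k * (\<theta> / sqrt (S2 t)))) ^ i / fact i)))"
  have Clim: "((\<lambda>t. C \<theta> t) \<longlongrightarrow> 0) at_top" for \<theta>
    unfolding C_def S2_def by (rule core_lim[OF b0 bs j rho ordb])
  have Mchar: "char (M t) \<theta> = exp (C \<theta> t - of_real (\<theta>\<^sup>2 / 2))" if t: "t > 0" for t \<theta>
  proof -
    define m where "m = S1 t"
    define F where "F = exp (gr t)"
    define u where "u = \<theta> / sqrt (S2 t)"
    define z1 where "z1 = of_real t * exp (\<i> * of_real u)"
    have Fpos: "F > 0" unfolding F_def by simp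
    have S2p: "S2 t > 0" using S2pos[OF t] .
    have "char (M t) \<theta> = (\<Sum>n. of_real (a n * t ^ n / ps_val a t) *
        iexp (\<theta> * ((real n - ps_mean a t) / ps_sigma a t)))"
      unfolding M_def by (rule wdist(3)[OF w0[OF that] ws])
    also have "\<dots> = (\<Sum>n. A n * z1 ^ n * (iexp (- (m * u)) / exp (g (of_real t))))"
    proof (intro suminf_cong)
      fix n
      show "of_real (a n * t ^ n / ps_val a t) * iexp (\<theta> * ((real n - ps_mean a t) / ps_sigma a t))
          = A n * z1 ^ n * (iexp (- (m * u)) / exp (g (of_real t)))"
        unfolding pv pm ps iexp_split z1_def u_def m_def
        by (simp add: Aa g_real exp_of_real power_mult_distrib)
    qed
    also have "\<dots> = exp (g z1) * (iexp (- (m * u)) / exp (g (of_real t)))"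
      by (rule sums_unique[symmetric]) (rule sums_mult2[OF es])
    also have "\<dots> = exp (g z1 - g (of_real t) - \<i> * of_real u * of_real m)"
      by (simp add: exp_diff exp_minus exp_add field_simps mult_ac)
    also have "g z1 - g (of_real t) - \<i> * of_real u * of_real m = C \<theta> t - of_real (\<theta>\<^sup>2 / 2)"
    proof -
      have trm: "complex_of_real (b k * t ^ k) *
          (iexp (real k * u) - (\<Sum>i\<le>2. (\<i> * (real k * u)) ^ i / fact i))
        = B k * z1 ^ k - B k * of_real t ^ k - \<i> * of_real u * (of_nat k * B k * of_real t ^ k)
          + of_real (u * u / 2) * (of_nat k * (of_nat k * B k) * of_real t ^ k)" for k
      proof -
        have z1k: "z1 ^ k = of_real t ^ k * iexp (real k * u)"
          unfolding z1_def by (simp add: power_mult_distrib exp_of_nat_mult[symmetric] mult_ac)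
        have e1: "B k * z1 ^ k = of_real (b k * t ^ k) * iexp (real k * u)"
          unfolding z1k Bb by simp
        have e2: "B k * of_real t ^ k = of_real (b k * t ^ k)" unfolding Bb by simp
        have e3: "of_nat k * B k * of_real t ^ k = of_real (real k) * of_real (b k * t ^ k)"
          unfolding Bb by simp
        have e4: "of_nat k * (of_nat k * B k) * of_real t ^ k
            = of_real (real k) * (of_real (real k) * of_real (b k * t ^ k))"
          unfolding Bb by simp
        show ?thesis unfolding e1 e2 e3 e4 sum_le2 by (rule trm_alg)
      qed
      have "(\<lambda>k. B k * z1 ^ k - B k * of_real t ^ k - \<i> * of_real u * (of_nat k * B k * of_real t ^ k)
          + of_real (u * u / 2) * (of_nat k * (of_nat k * B k) * of_real t ^ k))
          sums (g z1 - g (of_real t) - \<i> * of_real u * G1 (of_real t) + of_real (u * u / 2) * G2 (of_real t))"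
        unfolding G1_def G2_def by (intro sums_add sums_diff sums_mult gs mom(1) mom(2))
      then have "C \<theta> t = g z1 - g (of_real t) - \<i> * of_real u * G1 (of_real t) + of_real (u * u / 2) * G2 (of_real t)"
        unfolding C_def u_def[symmetric] trm by (rule sums_unique[symmetric])
      also have "\<dots> = g z1 - g (of_real t) - \<i> * of_real u * of_real m + of_real (u * u * S2 t / 2)"
        unfolding G1_real G2_real m_def by simp
      also have "u * u * S2 t = \<theta>\<^sup>2"
        unfolding u_def using S2p by (simp add: power2_eq_square)
      finally show ?thesis by simp
    qed
    finally show ?thesis .
  qed
  have charlim: "((\<lambda>t. char (M t) \<theta>) \<longlongrightarrow> char std_normal_distribution \<theta>) at_top" for \<theta>
  proof -
    have "((\<lambda>t. exp (C \<theta> t - of_real (\<theta>\<^sup>2 / 2))) \<longlongrightarrow> exp (0 - of_real (\<theta>\<^sup>2 / 2))) at_top"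
      by (intro tendsto_intros Clim)
    moreover have "eventually (\<lambda>t. exp (C \<theta> t - of_real (\<theta>\<^sup>2 / 2)) = char (M t) \<theta>) at_top"
      using eventually_gt_at_top[of "0::real"] by eventually_elim (simp add: Mchar)
    ultimately have "((\<lambda>t. char (M t) \<theta>) \<longlongrightarrow> exp (0 - of_real (\<theta>\<^sup>2 / 2))) at_top"
      by (rule Lim_transform_eventually)
    moreover have "exp (0 - complex_of_real (\<theta>\<^sup>2 / 2)) = char std_normal_distribution \<theta>"
    proof -
      have "exp (0 - complex_of_real (\<theta>\<^sup>2 / 2)) = exp (complex_of_real (- (\<theta>^2) / 2))" by simp
      also have "\<dots> = complex_of_real (exp (- (\<theta>^2) / 2))" by (rule exp_of_real)
      finally show ?thesis by (simp only: char_std_normal_distribution)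
    qed
    ultimately show ?thesis by simp
  qed
  have contcdf: "isCont (cdf std_normal_distribution) x" for x
  proof -
    interpret S: real_distribution std_normal_distribution by (rule real_dist_normal_dist)
    have "emeasure std_normal_distribution {x} = 0"
    proof -
      have "emeasure std_normal_distribution {x} = (\<integral>\<^sup>+ y. ennreal (std_normal_density y) * indicator {x} y \<partial>lborel)"
        by (subst emeasure_density) (auto intro!: nn_integral_cong)
      also have "\<dots> = ennreal (std_normal_density x) * emeasure lborel {x}"
        by (rule nn_integral_indicator_singleton) simp
      finally show ?thesis by simp
    qed
    then have "measure std_normal_distribution {x} = 0" by (simp add: measure_def)
    then show ?thesis by (simp add: S.isCont_cdf)
  qed
  show ?thesis
    unfolding a_eq gaussian_def
  proof
    fix x
    show "((\<lambda>t. ps_normalized_cdf a t x) \<longlongrightarrow> std_normal_cdf x) at_top"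
    proof (rule tendsto_at_topI_sequentially)
      fix X :: "nat \<Rightarrow> real"
      assume X: "filterlim X at_top sequentially"
      define Y where "Y = (\<lambda>n. max (X n) 1)"
      have Y: "filterlim Y at_top sequentially"
        unfolding Y_def by (rule filterlim_at_top_mono[OF X]) auto
      have Ypos: "Y n > 0" for n unfolding Y_def by simp
      have "weak_conv_m (\<lambda>n. M (Y n)) std_normal_distribution"
      proof (rule levy_continuity)
        show "real_distribution (M (Y n))" for n by (rule Mdist[OF Ypos])
        show "real_distribution std_normal_distribution" by (rule real_dist_normal_dist)
        show "(\<lambda>n. char (M (Y n)) \<theta>) \<longlonglongrightarrow> char std_normal_distribution \<theta>" for \<theta>
          by (rule filterlim_compose[OF charlim Y])
      qed
      then have "(\<lambda>n. cdf (M (Y n)) x) \<longlonglongrightarrow> cdf std_normal_distribution x"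
        unfolding weak_conv_m_def weak_conv_def using contcdf by blast
      then have lim: "(\<lambda>n. cdf (M (Y n)) x) \<longlonglongrightarrow> std_normal_cdf x"
        by (simp add: std_normal_cdf_def cdf_def)
      have "eventually (\<lambda>n. cdf (M (Y n)) x = ps_normalized_cdf a (X n) x) sequentially"
        using filterlim_at_top[THEN iffD1, OF X, rule_format, of 1]
      proof eventually_elim
        case (elim n)
        then have "Y n = X n" unfolding Y_def by simp
        then show ?case using Mcdf[OF Ypos[of n]] by simp
      qed
      then show "(\<lambda>n. ps_normalized_cdf a (X n) x) \<longlonglongrightarrow> std_normal_cdf x"
        by (rule Lim_transform_eventually[OF lim])
    qed
  qed
qed

end
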